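(* For every positive integer $n$ and every $k\le n$ there exists an instance of the myopic best-response dynamics described below (a graph with nonnegative embedding weights, features, a linear threshold classifier, and a scaled 2-norm cost) in which $n-k$ users move at round $k$.
   Context: Users $i$ have features $x_i\in\mathbb{R}^\ell$; embeddings $\phi(x_i;x_{-i})=\widetilde{w}_{ii}x_i+\sum_{j\neq i}\widetilde{w}_{ji}x_j$ with $\widetilde{w}_{ji}\ge0$. Classifier: $h_{\theta,b}(x_i;x_{-i})=\mathrm{sign}(\theta^\top\phi(x_i;x_{-i})+b)$, $\mathrm{sign}(0)=+1$. Cost $c_\beta(x,x')=\beta\|x-x'\|_2$ for some $\beta>0$. Dynamics: $x_i^{(0)}=x_i$; at each round $t\ge1$ all users update concurrently; user $i$ changes her features only if she is currently classified $-1$ and some $x'$ with $h(x';x^{(t-1)}_{-i})=+1$ has $c_\beta(x_i^{(t-1)},x')\le2$, in which case she moves to the minimum-cost such point (embedding exactly on the decision boundary); otherwise she stays. User $i$ "moves at round $t$" if $x_i^{(t)}\neq x_i^{(t-1)}$. *)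

theory Defs
  imports Complex_Main
begin

text \<open>Feature vectors in R^l are represented as functions nat => real that vanish
  at coordinates >= l.  Users are indexed by 0..<n.  The weight w j i is the
  embedding weight of user j in the embedding of user i (tilde w_{ji}).\<close>

definition feat_space :: "nat \<Rightarrow> (nat \<Rightarrow> real) set" where
  "feat_space l = {v. \<forall>c\<ge>l. v c = 0}"

definition l2dist :: "nat \<Rightarrow> (nat \<Rightarrow> real) \<Rightarrow> (nat \<Rightarrow> real) \<Rightarrow> real" where
  "l2dist l v u = sqrt (\<Sum>c<l. (v c - u c)^2)"

definition cost :: "real \<Rightarrow> nat \<Rightarrow> (nat \<Rightarrow> real) \<Rightarrow> (nat \<Rightarrow> real) \<Rightarrow> real" where
  "cost \<beta> l v u = \<beta> * l2dist l v u"

definition embed :: "nat \<Rightarrow> (nat \<Rightarrow> nat \<Rightarrow> real) \<Rightarrow> (nat \<Rightarrow> nat \<Rightarrow> real) \<Rightarrow> nat \<Rightarrow> (nat \<Rightarrow> real)" where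
  "embed n w X i = (\<lambda>c. \<Sum>j<n. w j i * X j c)"

definition score :: "nat \<Rightarrow> nat \<Rightarrow> (nat \<Rightarrow> nat \<Rightarrow> real) \<Rightarrow> (nat \<Rightarrow> real) \<Rightarrow> real
    \<Rightarrow> (nat \<Rightarrow> nat \<Rightarrow> real) \<Rightarrow> nat \<Rightarrow> real" where
  "score n l w \<theta> b X i = (\<Sum>c<l. \<theta> c * embed n w X i c) + b"

text \<open>Classifier with sign(0) = +1: positive iff score >= 0.\<close>
definition positive :: "nat \<Rightarrow> nat \<Rightarrow> (nat \<Rightarrow> nat \<Rightarrow> real) \<Rightarrow> (nat \<Rightarrow> real) \<Rightarrow> real
    \<Rightarrow> (nat \<Rightarrow> nat \<Rightarrow> real) \<Rightarrow> nat \<Rightarrow> bool" where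
  "positive n l w \<theta> b X i \<longleftrightarrow> score n l w \<theta> b X i \<ge> 0"

definition best_response :: "nat \<Rightarrow> nat \<Rightarrow> (nat \<Rightarrow> nat \<Rightarrow> real) \<Rightarrow> (nat \<Rightarrow> real) \<Rightarrow> real \<Rightarrow> real
    \<Rightarrow> (nat \<Rightarrow> nat \<Rightarrow> real) \<Rightarrow> nat \<Rightarrow> (nat \<Rightarrow> real)" where
  "best_response n l w \<theta> b \<beta> X i =
     (if \<not> positive n l w \<theta> b X i \<and>
         (\<exists>x'\<in>feat_space l. positive n l w \<theta> b (X(i := x')) i \<and> cost \<beta> l (X i) x' \<le> 2)
      then (THE x'. x' \<in> feat_space l \<and> positive n l w \<theta> b (X(i := x')) i \<and>
              (\<forall>y\<in>feat_space l. positive n l w \<theta> b (X(i := y)) i \<longrightarrow>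
                  cost \<beta> l (X i) x' \<le> cost \<beta> l (X i) y))
      else X i)"

primrec dyn :: "nat \<Rightarrow> nat \<Rightarrow> (nat \<Rightarrow> nat \<Rightarrow> real) \<Rightarrow> (nat \<Rightarrow> real) \<Rightarrow> real \<Rightarrow> real
    \<Rightarrow> (nat \<Rightarrow> nat \<Rightarrow> real) \<Rightarrow> nat \<Rightarrow> (nat \<Rightarrow> nat \<Rightarrow> real)" where
  "dyn n l w \<theta> b \<beta> x0 0 = x0"
| "dyn n l w \<theta> b \<beta> x0 (Suc t) =
     (\<lambda>i. if i < n then best_response n l w \<theta> b \<beta> (dyn n l w \<theta> b \<beta> x0 t) i
           else dyn n l w \<theta> b \<beta> x0 t i)"

definition movers :: "nat \<Rightarrow> nat \<Rightarrow> (nat \<Rightarrow> nat \<Rightarrow> real) \<Rightarrow> (nat \<Rightarrow> real) \<Rightarrow> real \<Rightarrow> real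
    \<Rightarrow> (nat \<Rightarrow> nat \<Rightarrow> real) \<Rightarrow> nat \<Rightarrow> nat set" where
  "movers n l w \<theta> b \<beta> x0 t =
     {i. i < n \<and> dyn n l w \<theta> b \<beta> x0 t i \<noteq> dyn n l w \<theta> b \<beta> x0 (t - 1) i}"

end

theory Submission
  imports Defs
begin

lemma l2dist1: "l2dist (Suc 0) v u = \<bar>v 0 - u 0\<bar>"
  by (simp add: l2dist_def)

lemma score1: "score n (Suc 0) w \<theta> b X i = \<theta> 0 * (\<Sum>j<n. w j i * X j 0) + b"
  by (simp add: score_def embed_def)

lemma sum_upd:
  fixes X :: "nat \<Rightarrow> nat \<Rightarrow> real" and w :: "nat \<Rightarrow> nat \<Rightarrow> real"
  assumes "i < n" "w i i = 1"
  shows "(\<Sum>j<n. w j i * (X(i:=x')) j 0) = x' 0 + (\<Sum>j\<in>{..<n}-{i}. w j i * X j 0)"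
proof -
  have "(\<Sum>j<n. w j i * (X(i:=x')) j 0) = w i i * (X(i:=x')) i 0 + (\<Sum>j\<in>{..<n}-{i}. w j i * (X(i:=x')) j 0)"
    using assms(1) by (intro sum.remove) auto
  also have "(\<Sum>j\<in>{..<n}-{i}. w j i * (X(i:=x')) j 0) = (\<Sum>j\<in>{..<n}-{i}. w j i * X j 0)"
    by (rule sum.cong) auto
  finally show ?thesis using assms by simp
qed

lemma pos_upd:
  assumes "i < n" "w i i = 1" "\<theta> 0 = 1"
  shows "positive n (Suc 0) w \<theta> 0 (X(i:=x')) i \<longleftrightarrow> x' 0 + (\<Sum>j\<in>{..<n}-{i}. w j i * X j 0) \<ge> 0"
  unfolding positive_def score1 using sum_upd[of i n w X x', OF assms(1,2)] assms by simp

lemma pos_self: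
  assumes "i < n" "w i i = 1" "\<theta> 0 = 1"
  shows "positive n (Suc 0) w \<theta> 0 X i \<longleftrightarrow> X i 0 + (\<Sum>j\<in>{..<n}-{i}. w j i * X j 0) \<ge> 0"
  using pos_upd[of i n w \<theta> X "X i", OF assms] by simp

lemma fs1: "x \<in> feat_space (Suc 0) \<longleftrightarrow> (\<forall>c\<ge>1. x c = 0)"
  by (simp add: feat_space_def)

lemma br1:
  fixes X :: "nat \<Rightarrow> nat \<Rightarrow> real"
  assumes "i < n" "w i i = 1" "\<theta> 0 = 1" "\<beta> > 0"
  defines "r \<equiv> (\<Sum>j\<in>{..<n}-{i}. w j i * X j 0)"
  shows "best_response n (Suc 0) w \<theta> 0 \<beta> X i =
     (if X i 0 + r < 0 \<and> \<beta> * (- r - X i 0) \<le> 2 then (\<lambda>c. if c = 0 then - r else 0) else X i)"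
proof -
  note P = pos_upd[of i n w \<theta> X, OF assms(1-3), folded r_def]
  note S = pos_self[of i n w \<theta> X, OF assms(1-3), folded r_def]
  define xs where "xs = (\<lambda>c::nat. if c = 0 then - r else (0::real))"
  show ?thesis
  proof (cases "X i 0 + r < 0 \<and> \<beta> * (- r - X i 0) \<le> 2")
    case True
    have T2: "\<beta> * (- X i 0 - r) \<le> 2" using True by (simp add: algebra_simps)
    have ex: "\<exists>x'\<in>feat_space (Suc 0). positive n (Suc 0) w \<theta> 0 (X(i := x')) i \<and> cost \<beta> (Suc 0) (X i) x' \<le> 2"
      using True T2 by (intro bexI[of _ xs]) (auto simp: P xs_def fs1 cost_def l2dist1)
    have "(THE x'. x' \<in> feat_space (Suc 0) \<and> positive n (Suc 0) w \<theta> 0 (X(i := x')) i \<and>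
              (\<forall>y\<in>feat_space (Suc 0). positive n (Suc 0) w \<theta> 0 (X(i := y)) i \<longrightarrow>
                  cost \<beta> (Suc 0) (X i) x' \<le> cost \<beta> (Suc 0) (X i) y)) = xs"
    proof (rule the_equality)
      show "xs \<in> feat_space (Suc 0) \<and> positive n (Suc 0) w \<theta> 0 (X(i := xs)) i \<and>
              (\<forall>y\<in>feat_space (Suc 0). positive n (Suc 0) w \<theta> 0 (X(i := y)) i \<longrightarrow>
                  cost \<beta> (Suc 0) (X i) xs \<le> cost \<beta> (Suc 0) (X i) y)"
        using True assms(4) by (auto simp: P xs_def fs1 cost_def l2dist1)
    next
      fix x' assume h: "x' \<in> feat_space (Suc 0) \<and> positive n (Suc 0) w \<theta> 0 (X(i := x')) i \<and>
              (\<forall>y\<in>feat_space (Suc 0). positive n (Suc 0) w \<theta> 0 (X(i := y)) i \<longrightarrow>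
                  cost \<beta> (Suc 0) (X i) x' \<le> cost \<beta> (Suc 0) (X i) y)"
      have xsin: "xs \<in> feat_space (Suc 0)" "positive n (Suc 0) w \<theta> 0 (X(i := xs)) i"
        by (auto simp: P xs_def fs1)
      have "cost \<beta> (Suc 0) (X i) x' \<le> cost \<beta> (Suc 0) (X i) xs" using h xsin by blast
      hence "\<bar>X i 0 - x' 0\<bar> \<le> \<bar>X i 0 + r\<bar>" using assms(4) by (simp add: cost_def l2dist1 xs_def)
      moreover have "x' 0 + r \<ge> 0" using h P by blast
      ultimately have "x' 0 = - r" using True by linarith
      moreover have "\<forall>c\<ge>1. x' c = 0" using h fs1 by blast
      ultimately show "x' = xs" unfolding xs_def
        by (intro ext) (metis not_less less_one)
    qed
    then show ?thesis using True ex S unfolding best_response_def xs_def by auto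
  next
    case False
    have "\<not> (\<not> positive n (Suc 0) w \<theta> 0 X i \<and>
         (\<exists>x'\<in>feat_space (Suc 0). positive n (Suc 0) w \<theta> 0 (X(i := x')) i \<and> cost \<beta> (Suc 0) (X i) x' \<le> 2))"
    proof
      assume a: "\<not> positive n (Suc 0) w \<theta> 0 X i \<and>
         (\<exists>x'\<in>feat_space (Suc 0). positive n (Suc 0) w \<theta> 0 (X(i := x')) i \<and> cost \<beta> (Suc 0) (X i) x' \<le> 2)"
      then obtain x' where "positive n (Suc 0) w \<theta> 0 (X(i := x')) i" "cost \<beta> (Suc 0) (X i) x' \<le> 2" by blast
      hence "x' 0 + r \<ge> 0" "\<beta> * \<bar>X i 0 - x' 0\<bar> \<le> 2" using P by (auto simp: cost_def l2dist1)
      moreover have "X i 0 + r < 0" using a S by auto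
      ultimately have "- r - X i 0 \<le> \<bar>X i 0 - x' 0\<bar>" by linarith
      hence "\<beta> * (- r - X i 0) \<le> \<beta> * \<bar>X i 0 - x' 0\<bar>"
        using assms(4) by (intro mult_left_mono) auto
      hence "\<beta> * (- r - X i 0) \<le> 2" using \<open>\<beta> * \<bar>X i 0 - x' 0\<bar> \<le> 2\<close> by linarith
      then show False using False \<open>X i 0 + r < 0\<close> by linarith
    qed
    then show ?thesis using False unfolding best_response_def by auto
  qed
qed


definition WW :: "nat \<Rightarrow> nat \<Rightarrow> nat \<Rightarrow> nat \<Rightarrow> real" where
  "WW n k j i = (if j = i then 1 else if i < n - 1 \<and> 1 \<le> min i (k - 1) \<and> j = min i (k - 1) - 1 then 1 else 0)"

definition SS :: "nat \<Rightarrow> nat \<Rightarrow> nat \<Rightarrow> nat \<Rightarrow> nat \<Rightarrow> real" where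
  "SS n k t i c = (if c = 0 \<and> i < n - 1 \<and> t \<le> min i (k - 1) then -1 else 0)"

definition TH :: "nat \<Rightarrow> real" where
  "TH c = (if c = 0 then 1 else 0)"

lemma r_eq:
  assumes "i < n"
  shows "(\<Sum>j\<in>{..<n}-{i}. WW n k j i * SS n k t j 0) =
    (if i < n - 1 \<and> 1 \<le> min i (k - 1) then SS n k t (min i (k - 1) - 1) 0 else 0)"
proof -
  let ?p = "min i (k - 1) - 1"
  let ?C = "i < n - 1 \<and> 1 \<le> min i (k - 1)"
  have "(\<Sum>j\<in>{..<n}-{i}. WW n k j i * SS n k t j 0) =
        (\<Sum>j\<in>{..<n}-{i}. if j = ?p then (if ?C then SS n k t j 0 else 0) else 0)"
    by (rule sum.cong) (auto simp: WW_def)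
  also have "\<dots> = (if ?p \<in> {..<n}-{i} then (if ?C then SS n k t ?p 0 else 0) else 0)"
    by (rule sum.delta) simp
  also have "\<dots> = (if ?C then SS n k t ?p 0 else 0)"
    using assms by auto
  finally show ?thesis .
qed

lemma step:
  assumes "i < n"
  shows "best_response n (Suc 0) (WW n k) TH 0 2 (SS n k t) i = SS n k (Suc t) i"
proof -
  have br: "best_response n (Suc 0) (WW n k) TH 0 2 (SS n k t) i =
     (if SS n k t i 0 + r < 0 \<and> 2 * (- r - SS n k t i 0) \<le> 2 then (\<lambda>c. if c = 0 then - r else 0) else SS n k t i)"
    if "r = (\<Sum>j\<in>{..<n}-{i}. WW n k j i * SS n k t j 0)" for r
    unfolding that by (rule br1) (use assms in \<open>auto simp: WW_def TH_def\<close>)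
  note R = r_eq[OF assms, of k t]
  show ?thesis
  proof (cases "i < n - 1 \<and> 1 \<le> min i (k - 1)")
    case True
    have p: "min (min i (k - 1) - 1) (k - 1) = min i (k - 1) - 1" "min i (k - 1) - 1 < n - 1"
      using True by auto
    define d where "d = min i (k - 1)"
    have a: "SS n k t i 0 = (if t \<le> d then -1 else 0)" using True by (simp add: SS_def d_def)
    have r: "SS n k t (d - 1) 0 = (if t \<le> d - 1 then -1 else 0)" using True p by (simp add: SS_def d_def)
    have Rd: "(\<Sum>j\<in>{..<n}-{i}. WW n k j i * SS n k t j 0) = SS n k t (d - 1) 0"
      using R True by (simp add: d_def)
    have eq: "SS n k t i c = SS n k (Suc t) i c" if "t \<noteq> d" for c
      using that True unfolding SS_def d_def by auto
    have z: "SS n k (Suc t) i = (\<lambda>c. 0)" if "t \<ge> d" using that True unfolding SS_def d_def by (auto intro!: ext)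
    have "1 \<le> d" using True d_def by simp
    define \<rho> where "\<rho> = SS n k t (d - 1) 0"
    define A where "A = SS n k t i 0"
    have B: "best_response n (Suc 0) (WW n k) TH 0 2 (SS n k t) i =
     (if A + \<rho> < 0 \<and> 2 * (- \<rho> - A) \<le> 2 then (\<lambda>c. if c = 0 then - \<rho> else 0) else SS n k t i)"
      unfolding A_def \<rho>_def by (rule br[OF Rd[symmetric]])
    consider "t < d" | "t = d" | "t > d" by linarith
    then show ?thesis
    proof cases
      case 1
      then have "A = -1" "\<rho> = -1" using a r by (simp_all add: A_def \<rho>_def)
      then have "\<not> (A + \<rho> < 0 \<and> 2 * (- \<rho> - A) \<le> 2)" by simp
      then show ?thesis unfolding B using eq 1 by (simp only: if_not_P) (rule ext, simp)
    next
      case 2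
      then have "A = -1" "\<rho> = 0" using a r \<open>1 \<le> d\<close> by (simp_all add: A_def \<rho>_def)
      then have c: "A + \<rho> < 0 \<and> 2 * (- \<rho> - A) \<le> 2" by simp
      show ?thesis unfolding B z[OF eq_refl[OF 2[symmetric]]] by (simp only: if_P[OF c]) (rule ext, simp add: \<open>\<rho> = 0\<close>)
    next
      case 3
      then have "A = 0" "\<rho> = 0" using a r by (simp_all add: A_def \<rho>_def)
      then have "\<not> (A + \<rho> < 0 \<and> 2 * (- \<rho> - A) \<le> 2)" by simp
      then show ?thesis unfolding B using eq 3 by (simp only: if_not_P) (rule ext, simp)
    qed
  next
    case False
    have Rd: "(\<Sum>j\<in>{..<n}-{i}. WW n k j i * SS n k t j 0) = 0"
      using R by (simp only: if_not_P[OF False])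
    have a: "SS n k t i 0 = (if i < n - 1 \<and> t = 0 then -1 else 0)" using False by (auto simp add: SS_def)
    have z: "SS n k (Suc t) i = (\<lambda>c. 0)" using False unfolding SS_def by (auto intro!: ext)
    have z2: "SS n k t i = (\<lambda>c. 0)" if "\<not> (i < n - 1 \<and> t = 0)" using False that unfolding SS_def by (auto intro!: ext)
    define A where "A = SS n k t i 0"
    have B: "best_response n (Suc 0) (WW n k) TH 0 2 (SS n k t) i =
     (if A + 0 < 0 \<and> 2 * (- 0 - A) \<le> 2 then (\<lambda>c. if c = 0 then - 0 else 0) else SS n k t i)"
      unfolding A_def by (rule br[OF Rd[symmetric]])
    show ?thesis
    proof (cases "i < n - 1 \<and> t = 0")
      case True
      then have "A = -1" using a by (simp add: A_def)
      then have c: "A + 0 < 0 \<and> 2 * (- 0 - A) \<le> (2::real)" by simp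
      show ?thesis unfolding B z by (simp only: if_P[OF c]) (rule ext, simp)
    next
      case F: False
      then have "A = 0" using a by (simp add: A_def)
      then have c: "\<not> (A + 0 < 0 \<and> 2 * (- 0 - A) \<le> (2::real))" by simp
      show ?thesis unfolding B z z2[OF F] by (simp only: if_not_P[OF c])
    qed
  qed
qed

lemma dyn_SS: "dyn n (Suc 0) (WW n k) TH 0 2 (SS n k 0) t = SS n k t"
proof (induction t)
  case 0 then show ?case by simp
next
  case (Suc t)
  have e: "dyn n (Suc 0) (WW n k) TH 0 2 (SS n k 0) (Suc t) =
    (\<lambda>i. if i < n then best_response n (Suc 0) (WW n k) TH 0 2 (SS n k t) i else SS n k t i)"
    by (simp only: dyn.simps Suc.IH)
  show ?case
  proof (rule ext)
    fix i
    show "dyn n (Suc 0) (WW n k) TH 0 2 (SS n k 0) (Suc t) i = SS n k (Suc t) i"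
    proof (cases "i < n")
      case True then show ?thesis unfolding e using step[of i n k t] by simp
    next
      case False then show ?thesis unfolding e by (auto simp: SS_def intro!: ext)
    qed
  qed
qed

lemma diff_iff:
  assumes "1 \<le> k"
  shows "SS n k k i \<noteq> SS n k (k - 1) i \<longleftrightarrow> (i < n - 1 \<and> k - 1 \<le> i)"
proof
  assume h: "SS n k k i \<noteq> SS n k (k - 1) i"
  show "i < n - 1 \<and> k - 1 \<le> i"
  proof (rule ccontr)
    assume "\<not> (i < n - 1 \<and> k - 1 \<le> i)"
    then have "\<forall>c. SS n k k i c = SS n k (k - 1) i c" using assms by (auto simp: SS_def)
    then show False using h by blast
  qed
next
  assume a: "i < n - 1 \<and> k - 1 \<le> i"
  then have 1: "SS n k k i 0 = 0" using assms by (simp add: SS_def)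
  have 2: "SS n k (k - 1) i 0 = -1" using a by (simp add: SS_def)
  show "SS n k k i \<noteq> SS n k (k - 1) i"
  proof
    assume "SS n k k i = SS n k (k - 1) i"
    then have "SS n k k i 0 = SS n k (k - 1) i 0" by simp
    then show False using 1 2 by simp
  qed
qed

theorem proposition4:
  fixes n k :: nat
  assumes "n \<ge> 1" and "1 \<le> k" and "k \<le> n"
  shows "\<exists>(l::nat) (w::nat \<Rightarrow> nat \<Rightarrow> real) (x0::nat \<Rightarrow> nat \<Rightarrow> real) (\<theta>::nat \<Rightarrow> real) (b::real) (\<beta>::real).
           l \<ge> 1 \<and> \<beta> > 0 \<and>
           (\<forall>i<n. \<forall>j<n. w j i \<ge> 0) \<and>
           (\<forall>i<n. x0 i \<in> feat_space l) \<and>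
           (\<forall>i\<ge>n. \<forall>c. x0 i c = 0) \<and>
           (\<forall>c\<ge>l. \<theta> c = 0) \<and>
           card (movers n l w \<theta> b \<beta> x0 k) = n - k"
proof -
  have m1: "movers n (Suc 0) (WW n k) TH 0 2 (SS n k 0) k = {i. i < n \<and> SS n k k i \<noteq> SS n k (k - 1) i}"
    by (simp only: movers_def dyn_SS)
  have "movers n (Suc 0) (WW n k) TH 0 2 (SS n k 0) k = {k - 1..<n - 1}"
  proof (rule set_eqI)
    fix i
    show "i \<in> movers n (Suc 0) (WW n k) TH 0 2 (SS n k 0) k \<longleftrightarrow> i \<in> {k - 1..<n - 1}"
      unfolding m1 mem_Collect_eq diff_iff[OF assms(2)] atLeastLessThan_iff by linarith
  qed
  then have "card (movers n (Suc 0) (WW n k) TH 0 2 (SS n k 0) k) = n - k"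
    using assms by simp
  moreover have "\<forall>i<n. \<forall>j<n. WW n k j i \<ge> 0" by (simp add: WW_def)
  moreover have "\<forall>i<n. SS n k 0 i \<in> feat_space (Suc 0)" by (simp add: SS_def feat_space_def)
  moreover have "\<forall>i\<ge>n. \<forall>c. SS n k 0 i c = 0" by (auto simp add: SS_def)
  moreover have "\<forall>c\<ge>Suc 0. TH c = 0" by (simp add: TH_def)
  ultimately show ?thesis
    by (intro exI[of _ "Suc 0"] exI[of _ "WW n k"] exI[of _ "SS n k 0"] exI[of _ TH] exI[of _ 0]
        exI[of _ "2::real"]) (intro conjI; assumption | simp)
qed

end
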